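(* Let $p_1,\dots,p_n\ge0$ and unit vectors $\vec a_1,\dots,\vec a_n\in\mathbb{R}^3$ satisfy $\sum_ip_i=2$ and $\sum_ip_i\vec a_i=\vec0$, and let $f:\mathbb{R}^3\to\mathbb{R}$, $f(\vec x)=\sum_ip_i\,\Theta(\vec x\cdot\vec a_i)$. Then (1) $f(\vec x)=\frac12\sum_ip_i\,|\vec a_i\cdot\vec x|$ for all $\vec x\in\mathbb{R}^3$; in particular $f$ is continuous and $f(\alpha\vec x)=|\alpha|f(\vec x)$ for all $\alpha\in\mathbb{R}$ (so $f(-\vec x)=f(\vec x)$); (2) $\sum_{s_x,s_y,s_z=\pm1}f(\vec v_{s_xs_ys_z})\le 8$.
   Context: $\Theta(x)=x$ for $x\ge0$ and $\Theta(x)=0$ for $x<0$. For $s_x,s_y,s_z\in\{+1,-1\}$, $\vec v_{s_xs_ys_z}=(s_x,s_y,s_z)^T$. *)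

theory Defs
  imports "HOL-Analysis.Analysis"
begin

definition Theta :: "real \<Rightarrow> real" where
  "Theta x = (if x \<ge> 0 then x else 0)"

definition sgnvec :: "real \<Rightarrow> real \<Rightarrow> real \<Rightarrow> real^3" where
  "sgnvec sx sy sz = (\<chi> i. if i = 1 then sx else if i = 2 then sy else sz)"

end

theory Submission
  imports Defs
begin

lemma inner_sgnvec: "(a::real^3) \<bullet> sgnvec sx sy sz = a$1 * sx + a$2 * sy + a$3 * sz"
  by (simp add: sgnvec_def inner_vec_def sum_3)

lemma unit3: "norm (a::real^3) = 1 \<Longrightarrow> (a$1)^2 + (a$2)^2 + (a$3)^2 = 1"
  by (simp add: norm_eq_sqrt_inner inner_vec_def sum_3 power2_eq_square)

lemma four_abs: fixes x y z :: real
  assumes "x^2+y^2+z^2 = 1"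
  shows "\<bar>x+y+z\<bar> + \<bar>x+y-z\<bar> + \<bar>x-y+z\<bar> + \<bar>x-y-z\<bar> \<le> 4"
proof -
  define S where "S = \<bar>x+y+z\<bar> + \<bar>x+y-z\<bar> + \<bar>x-y+z\<bar> + \<bar>x-y-z\<bar>"
  have sq: "(x+y+z)^2 + (x+y-z)^2 + (x-y+z)^2 + (x-y-z)^2 = 4"
  proof -
    have "(x+y+z)^2 + (x+y-z)^2 + (x-y+z)^2 + (x-y-z)^2 = 4*(x^2+y^2+z^2)" by algebra
    then show ?thesis using assms by simp
  qed
  have "S^2 \<le> 4 * ((x+y+z)^2 + (x+y-z)^2 + (x-y+z)^2 + (x-y-z)^2)"
  proof -
    have h: "\<And>u v w t :: real. (u+v+w+t)^2 \<le> 4*(u^2+v^2+w^2+t^2)"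
    proof -
      fix u v w t :: real
      have e: "4*(u^2+v^2+w^2+t^2) - (u+v+w+t)^2 = (u-v)^2+(u-w)^2+(u-t)^2+(v-w)^2+(v-t)^2+(w-t)^2"
        by algebra
      have "0 \<le> (u-v)^2+(u-w)^2+(u-t)^2+(v-w)^2+(v-t)^2+(w-t)^2" by (intro add_nonneg_nonneg zero_le_power2)
      then show "(u+v+w+t)^2 \<le> 4*(u^2+v^2+w^2+t^2)" using e by linarith
    qed
    have "S^2 \<le> 4*(\<bar>x+y+z\<bar>^2 + \<bar>x+y-z\<bar>^2 + \<bar>x-y+z\<bar>^2 + \<bar>x-y-z\<bar>^2)"
      unfolding S_def by (rule h)
    then show ?thesis by (simp only: power2_abs)
  qed
  then have "S^2 \<le> 4 * 4" unfolding sq .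
  then have "S^2 \<le> 4^2" by (simp only: power2_eq_square)
  moreover have "S \<ge> 0" unfolding S_def by (intro add_nonneg_nonneg abs_ge_zero)
  ultimately have "S \<le> 4" by (intro power2_le_imp_le[of S "4::real"]) (assumption, simp)
  then show ?thesis by (simp only: S_def)
qed

lemma eight_abs: fixes x y z :: real
  assumes "x^2+y^2+z^2 = 1"
  shows "\<bar>- x - y - z\<bar> + \<bar>- x - y + z\<bar> + (\<bar>y - x - z\<bar> + \<bar>y - x + z\<bar>) +
    (\<bar>x - y - z\<bar> + \<bar>x - y + z\<bar> + (\<bar>x + y - z\<bar> + \<bar>x + y + z\<bar>)) \<le> 8"
proof -
  have 1: "\<bar>- x - y - z\<bar> = \<bar>x+y+z\<bar>" by arith
  have 2: "\<bar>- x - y + z\<bar> = \<bar>x+y-z\<bar>" by arith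
  have 3: "\<bar>y - x - z\<bar> = \<bar>x-y+z\<bar>" by arith
  have 4: "\<bar>y - x + z\<bar> = \<bar>x-y-z\<bar>" by arith
  show ?thesis using four_abs[OF assms] 1 2 3 4 by linarith
qed

lemma theta_abs: "Theta t = (t + \<bar>t\<bar>)/2"
  by (simp add: Theta_def)

theorem mainTheorem5:
  fixes n :: nat and p :: "nat \<Rightarrow> real" and a :: "nat \<Rightarrow> real^3"
    and f :: "real^3 \<Rightarrow> real"
  assumes p_nonneg: "\<And>i. i < n \<Longrightarrow> p i \<ge> 0"
    and a_unit: "\<And>i. i < n \<Longrightarrow> norm (a i) = 1"
    and p_sum: "(\<Sum>i<n. p i) = 2"
    and pa_sum: "(\<Sum>i<n. p i *\<^sub>R a i) = 0"
    and f_def: "f = (\<lambda>x. \<Sum>i<n. p i * Theta (x \<bullet> a i))"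
  shows "(\<forall>x. f x = (1/2) * (\<Sum>i<n. p i * \<bar>a i \<bullet> x\<bar>))
       \<and> continuous_on UNIV f
       \<and> (\<forall>\<alpha> x. f (\<alpha> *\<^sub>R x) = \<bar>\<alpha>\<bar> * f x)
       \<and> (\<forall>x. f (- x) = f x)
       \<and> (\<Sum>sx\<in>{-1,1}. \<Sum>sy\<in>{-1,1}. \<Sum>sz\<in>{-1,1}. f (sgnvec sx sy sz)) \<le> 8"
proof -
  have F: "f x = (1/2) * (\<Sum>i<n. p i * \<bar>a i \<bullet> x\<bar>)" for x
  proof -
    have "f x = (\<Sum>i<n. (1/2) * (p i * (x \<bullet> a i)) + (1/2) * (p i * \<bar>a i \<bullet> x\<bar>))"
      unfolding f_def theta_abs by (rule sum.cong) (auto simp: algebra_simps inner_commute)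
    also have "\<dots> = (1/2) * (x \<bullet> (\<Sum>i<n. p i *\<^sub>R a i)) + (1/2) * (\<Sum>i<n. p i * \<bar>a i \<bullet> x\<bar>)"
      by (simp add: sum.distrib sum_distrib_left inner_sum_right)
    finally show ?thesis using pa_sum by simp
  qed
  have Ff: "f = (\<lambda>x. (1/2) * (\<Sum>i<n. p i * \<bar>a i \<bullet> x\<bar>))" using F by auto
  have C: "continuous_on UNIV f" unfolding Ff by (intro continuous_intros)
  have H: "f (\<alpha> *\<^sub>R x) = \<bar>\<alpha>\<bar> * f x" for \<alpha> x
    unfolding Ff by (simp add: abs_mult sum_distrib_left algebra_simps)
  have N: "f (- x) = f x" for x using H[of "-1" x] by simp
  have per: "(\<Sum>sx\<in>{-1,1}. \<Sum>sy\<in>{-1,1}. \<Sum>sz\<in>{-1,1::real}. \<bar>a i \<bullet> sgnvec sx sy sz\<bar>) \<le> 8"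
    if "i < n" for i
  proof -
    have u: "(a i$1)^2 + (a i$2)^2 + (a i$3)^2 = 1" using unit3 a_unit that by blast
    show ?thesis using eight_abs[OF u] by (simp add: inner_sgnvec)
  qed
  have "(\<Sum>sx\<in>{-1,1}. \<Sum>sy\<in>{-1,1}. \<Sum>sz\<in>{-1,1}. f (sgnvec sx sy sz))
     = (\<Sum>i<n. (1/2) * p i * (\<Sum>sx\<in>{-1,1}. \<Sum>sy\<in>{-1,1}. \<Sum>sz\<in>{-1,1::real}. \<bar>a i \<bullet> sgnvec sx sy sz\<bar>))"
    unfolding Ff by (simp add: sum_distrib_left sum.distrib algebra_simps)
  also have "\<dots> \<le> (\<Sum>i<n. (1/2) * p i * 8)"
  proof (rule sum_mono)
    fix i assume "i \<in> {..<n}"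
    then have "i < n" by simp
    show "(1/2) * p i * (\<Sum>sx\<in>{-1,1}. \<Sum>sy\<in>{-1,1}. \<Sum>sz\<in>{-1,1::real}. \<bar>a i \<bullet> sgnvec sx sy sz\<bar>) \<le> (1/2) * p i * 8"
      by (rule mult_left_mono[OF per[OF \<open>i < n\<close>]]) (use p_nonneg[OF \<open>i < n\<close>] in simp)
  qed
  also have "\<dots> = 8" using p_sum by (simp add: sum_distrib_left[symmetric] sum_distrib_right[symmetric])
  finally have S: "(\<Sum>sx\<in>{-1,1}. \<Sum>sy\<in>{-1,1}. \<Sum>sz\<in>{-1,1}. f (sgnvec sx sy sz)) \<le> 8" .
  show ?thesis using F C H N S by blast
qed

end
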